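(* Let $\mathbb{F}$ be a field and $n\ge1$. Every maximal (with respect to inclusion) nilpotent subsemigroup $T$ of $M(n,\mathbb{F})$ is a subalgebra of $M(n,\mathbb{F})$, i.e. $T$ is closed under addition and multiplication by scalars (in addition to matrix multiplication).
   Context: $M(n,\mathbb{F})$ denotes the semigroup of all $n\times n$ matrices over $\mathbb{F}$ under matrix multiplication. A semigroup $S$ with zero $0$ is nilpotent of nilpotency degree $k$ if $a_1a_2\cdots a_k=0$ for all $a_1,\dots,a_k\in S$ and there exist $b_1,\dots,b_{k-1}\in S$ with $b_1\cdots b_{k-1}\neq 0$; a nilpotent subsemigroup of $M(n,\mathbb{F})$ is one that is nilpotent with the zero matrix as its zero. Maximality here is among all nilpotent subsemigroups of $M(n,\mathbb{F})$ (of any nilpotency degree). *)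

theory Defs
  imports "HOL-Analysis.Analysis"
begin

text \<open>n x n matrices over a field are modelled as the type 'a^'n^'n with 'n a finite
  index type (n = CARD('n) >= 1 automatically).\<close>

definition mat_prod_list :: "('a::field^'n^'n) list \<Rightarrow> 'a^'n^'n" where
  "mat_prod_list xs = foldr (\<lambda>A B. A ** B) xs (mat 1)"

definition nilpotent_subsemigroup :: "('a::field^'n^'n) set \<Rightarrow> bool" where
  "nilpotent_subsemigroup S \<longleftrightarrow>
     0 \<in> S \<and> (\<forall>A\<in>S. \<forall>B\<in>S. A ** B \<in> S) \<and>
     (\<exists>k. \<forall>xs. length xs = k \<and> set xs \<subseteq> S \<longrightarrow> mat_prod_list xs = 0)"

definition maximal_nilpotent_subsemigroup :: "('a::field^'n^'n) set \<Rightarrow> bool" where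
  "maximal_nilpotent_subsemigroup T \<longleftrightarrow>
     nilpotent_subsemigroup T \<and>
     (\<forall>S. nilpotent_subsemigroup S \<and> T \<subseteq> S \<longrightarrow> S = T)"

definition mat_scale :: "'a::field \<Rightarrow> 'a^'n^'n \<Rightarrow> 'a^'n^'n" where
  "mat_scale c A = (\<chi> i j. c * A $ i $ j)"

end

theory Submission
  imports Defs
begin

inductive_set gen_alg :: "('a::field^'n^'n) set \<Rightarrow> ('a^'n^'n) set" for T where
  base: "A \<in> T \<Longrightarrow> A \<in> gen_alg T"
| add: "A \<in> gen_alg T \<Longrightarrow> B \<in> gen_alg T \<Longrightarrow> A + B \<in> gen_alg T"
| scl: "A \<in> gen_alg T \<Longrightarrow> mat_scale c A \<in> gen_alg T"

lemma matrix_add_rdistrib: "((A::'a::field^'n^'n) + B) ** C = A ** C + B ** C"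
  by (simp add: vec_eq_iff matrix_matrix_mult_def distrib_right sum.distrib)

lemma mat_scale_left: "(mat_scale c A :: 'a::field^'n^'n) ** B = mat_scale c (A ** B)"
  by (simp add: vec_eq_iff mat_scale_def matrix_matrix_mult_def sum_distrib_left mult.assoc)

lemma mat_scale_right: "(A :: 'a::field^'n^'n) ** mat_scale c B = mat_scale c (A ** B)"
  by (simp add: vec_eq_iff mat_scale_def matrix_matrix_mult_def sum_distrib_left mult.left_commute)

lemma foldr_mat: "foldr (\<lambda>A B. A ** B) xs M = mat_prod_list xs ** (M :: 'a::field^'n^'n)"
  by (induction xs) (auto simp: mat_prod_list_def matrix_mul_assoc)

lemma mpl_append: "mat_prod_list (xs @ a # ys) = mat_prod_list xs ** (a ** mat_prod_list (ys :: ('a::field^'n^'n) list))"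
proof -
  have "mat_prod_list (xs @ a # ys) = foldr (\<lambda>A B. A ** B) xs (a ** mat_prod_list ys)"
    unfolding mat_prod_list_def by simp
  also have "\<dots> = mat_prod_list xs ** (a ** mat_prod_list ys)" by (rule foldr_mat)
  finally show ?thesis .
qed

lemma gen_alg_sandwich:
  fixes L R :: "'a::field^'n^'n"
  assumes "A \<in> gen_alg T" "\<forall>B\<in>T. L ** (B ** R) = 0"
  shows "L ** (A ** R) = (0::'a::field^'n^'n)"
  using assms
proof (induction A rule: gen_alg.induct)
  case (add A B) then show ?case
    by (simp add: matrix_add_ldistrib matrix_add_rdistrib)
next
  case (scl A c) then show ?case
    proof -
    have "L ** (mat_scale c A ** R) = mat_scale c (L ** (A ** R))"
      by (simp only: mat_scale_left mat_scale_right)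
    also have "\<dots> = 0" using scl by (simp add: vec_eq_iff mat_scale_def)
    finally show ?thesis .
  qed
qed auto

lemma gen_alg_mult:
  assumes "A \<in> gen_alg T" "B \<in> gen_alg T" "\<forall>A\<in>T. \<forall>B\<in>T. A ** B \<in> T"
  shows "A ** B \<in> gen_alg (T :: ('a::field^'n^'n) set)"
  using assms
proof (induction A rule: gen_alg.induct)
  case (base A)
  from base.prems(1) show ?case
  proof (induction B rule: gen_alg.induct)
    case (base B) then show ?case using \<open>A \<in> T\<close> assms(3) by (auto intro: gen_alg.base)
  next
    case (add B1 B2) then show ?case by (simp add: matrix_add_ldistrib gen_alg.add)
  next
    case (scl B c) then show ?case by (simp add: mat_scale_right gen_alg.scl)
  qed
next
  case (add A1 A2) then show ?case by (simp add: matrix_add_rdistrib gen_alg.add)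
next
  case (scl A c) then show ?case by (simp add: mat_scale_left gen_alg.scl)
qed

lemma gen_alg_nil:
  assumes "\<forall>xs. length xs = k \<and> set xs \<subseteq> T \<longrightarrow> mat_prod_list xs = 0"
  shows "j \<le> k \<Longrightarrow> length xs = j \<Longrightarrow> set xs \<subseteq> gen_alg T \<Longrightarrow> length ys = k - j
     \<Longrightarrow> set ys \<subseteq> T \<Longrightarrow> mat_prod_list (ys @ xs) = (0::'a::field^'n^'n)"
proof (induction j arbitrary: xs ys)
  case 0 then show ?case using assms by auto
next
  case (Suc j)
  then obtain a xs' where xs: "xs = a # xs'" by (cases xs) auto
  have "mat_prod_list ys ** (a ** mat_prod_list xs') = 0"
  proof (rule gen_alg_sandwich)
    show "a \<in> gen_alg T" using Suc.prems xs by auto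
    show "\<forall>B\<in>T. mat_prod_list ys ** (B ** mat_prod_list xs') = 0"
    proof
      fix B assume "B \<in> T"
      have "mat_prod_list ((ys @ [B]) @ xs') = 0"
        using Suc.IH[of xs' "ys @ [B]"] Suc.prems xs \<open>B \<in> T\<close> by auto
      then show "mat_prod_list ys ** (B ** mat_prod_list xs') = 0"
        by (simp add: mpl_append)
    qed
  qed
  then show ?case by (simp add: xs mpl_append)
qed

theorem lemma3:
  fixes T :: "('a::field^'n^'n) set"
  assumes "maximal_nilpotent_subsemigroup T"
  shows "(\<forall>A\<in>T. \<forall>B\<in>T. A + B \<in> T) \<and> (\<forall>c. \<forall>A\<in>T. mat_scale c A \<in> T)
         \<and> (\<forall>A\<in>T. \<forall>B\<in>T. A ** B \<in> T)"
proof -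
  have nT: "nilpotent_subsemigroup T" and mx: "\<And>S. nilpotent_subsemigroup S \<Longrightarrow> T \<subseteq> S \<Longrightarrow> S = T"
    using assms unfolding maximal_nilpotent_subsemigroup_def by auto
  from nT have z: "0 \<in> T" and m: "\<forall>A\<in>T. \<forall>B\<in>T. A ** B \<in> T"
    and k: "\<exists>k. \<forall>xs. length xs = k \<and> set xs \<subseteq> T \<longrightarrow> mat_prod_list xs = 0"
    unfolding nilpotent_subsemigroup_def by auto
  from k obtain k where k: "\<forall>xs. length xs = k \<and> set xs \<subseteq> T \<longrightarrow> mat_prod_list xs = 0" by blast
  have "nilpotent_subsemigroup (gen_alg T)"
    unfolding nilpotent_subsemigroup_def
  proof (intro conjI)
    show "0 \<in> gen_alg T" using z by (rule gen_alg.base)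
    show "\<forall>A\<in>gen_alg T. \<forall>B\<in>gen_alg T. A ** B \<in> gen_alg T" using gen_alg_mult m by blast
    show "\<exists>k. \<forall>xs. length xs = k \<and> set xs \<subseteq> gen_alg T \<longrightarrow> mat_prod_list xs = 0"
      using gen_alg_nil[OF k, of k _ "[]"] by auto
  qed
  moreover have "T \<subseteq> gen_alg T" by (auto intro: gen_alg.base)
  ultimately have "gen_alg T = T" using mx by blast
  then show ?thesis using m gen_alg.add[of _ T] gen_alg.scl[of _ T] by auto
qed

end
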